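(* Let $\{D_1,\ldots,D_n\}$ be a program (a finite set of $D$-formulas) and let $G$ be a goal ($G$-formula), in the language and operational semantics described in the context. Then $ex(\{D_1,\ldots,D_n\},G)$ terminates with a success if and only if $G$ follows from $\{!D_1,\ldots,!D_n\}$ in intuitionistic affine logic (intuitionistic linear logic together with the weakening rule).
   Context: Formulas are first-order, built over atomic formulas $A$. Goals ($G$-formulas) and modules ($D$-formulas) are given by the grammar $G ::= A \mid G\land G \mid D \Rightarrow G \mid \exists x\, G$, $D ::= A \mid G\supset D \mid \forall x\, D \mid D \sqcap D \mid D\land D$. A program $\mathcal{P}$ is a set of $D$-formulas. The connective $\sqcap$ is the choice-conjunction (additive conjunction $\&$) of linear logic. When read as formulas of intuitionistic affine logic, $D \Rightarrow G$ means that $D$ is added as a reusable clause for solving $G$ (i.e. $!D \multimap G$), $G\supset D$ is implication from the goal $G$ to $D$, and $!D$ marks $D$ as a reusable clause. Execution $ex(\mathcal{P},G)$ and backchaining $bchain(D,\mathcal{P},A)$ are defined by the rules: (1) $bchain(A,\mathcal{P},A)$ holds (success); (2) $bchain(G_1\supset D,\mathcal{P},A)$ if $ex(\mathcal{P},G_1)$ and $bchain(D,\mathcal{P},A)$; (3) $bchain(\forall x\,D,\mathcal{P},A)$ if $bchain([t/x]D,\mathcal{P},A)$ for some term $t$; (4) $bchain(D_0\land D_1,\mathcal{P},A)$ if $bchain(D_0,\mathcal{P},A)$; (5) $bchain(D_0\land D_1,\mathcal{P},A)$ if $bchain(D_1,\mathcal{P},A)$; (6) $bchain(D_0\sqcap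 D_1,\mathcal{P},A)$ if one chooses a successful one between $bchain(D_0,\mathcal{P},A)$ and $bchain(D_1,\mathcal{P},A)$ (the unchosen one is discarded); (7) $ex(\mathcal{P},A)$ if $D\in\mathcal{P}$ and $bchain(D,\mathcal{P},A)$; (8) $ex(\mathcal{P},G_1\land G_2)$ if $ex(\mathcal{P},G_1)$ and $ex(\mathcal{P},G_2)$; (9) $ex(\mathcal{P},\exists x\,G_1)$ if $ex(\mathcal{P},[t/x]G_1)$ for some term $t$; (10) $ex(\mathcal{P},D\Rightarrow G_1)$ if $ex(\{D\}\cup\mathcal{P},G_1)$. *)

theory Defs
  imports Main "HOL-Library.Multiset"
begin

section \<open>First-order terms and atoms (de Bruijn indices for variables)\<close>

datatype 'f trm = V nat | Fn 'f "'f trm list"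

datatype ('f, 'p) atm = Atm 'p "'f trm list"

primrec liftT :: "nat \<Rightarrow> 'f trm \<Rightarrow> 'f trm" where
  "liftT k (V i) = (if i < k then V i else V (Suc i))"
| "liftT k (Fn f ts) = Fn f (map (liftT k) ts)"

primrec substT :: "nat \<Rightarrow> 'f trm \<Rightarrow> 'f trm \<Rightarrow> 'f trm" where
  "substT k t (V i) = (if i < k then V i else if i = k then t else V (i - 1))"
| "substT k t (Fn f ts) = Fn f (map (substT k t) ts)"

primrec liftA :: "nat \<Rightarrow> ('f,'p) atm \<Rightarrow> ('f,'p) atm" where
  "liftA k (Atm p ts) = Atm p (map (liftT k) ts)"

primrec substA :: "nat \<Rightarrow> 'f trm \<Rightarrow> ('f,'p) atm \<Rightarrow> ('f,'p) atm" where
  "substA k t (Atm p ts) = Atm p (map (substT k t) ts)"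

section \<open>Goals (G-formulas) and modules (D-formulas)\<close>

datatype ('f, 'p) goal =
    GAtom "('f,'p) atm"
  | GAnd "('f,'p) goal" "('f,'p) goal"
  | GAssume "('f,'p) prog" "('f,'p) goal"
  | GEx "('f,'p) goal"                          \<comment> \<open>\<exists>x G (bound var = index 0)\<close>
and ('f, 'p) prog =
    DAtom "('f,'p) atm"
  | DImp "('f,'p) goal" "('f,'p) prog"
  | DAll "('f,'p) prog"
  | DChoice "('f,'p) prog" "('f,'p) prog"
  | DAnd "('f,'p) prog" "('f,'p) prog"

primrec substG :: "nat \<Rightarrow> 'f trm \<Rightarrow> ('f,'p) goal \<Rightarrow> ('f,'p) goal"
and substD :: "nat \<Rightarrow> 'f trm \<Rightarrow> ('f,'p) prog \<Rightarrow> ('f,'p) prog" where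
  "substG k t (GAtom a) = GAtom (substA k t a)"
| "substG k t (GAnd g1 g2) = GAnd (substG k t g1) (substG k t g2)"
| "substG k t (GAssume d g) = GAssume (substD k t d) (substG k t g)"
| "substG k t (GEx g) = GEx (substG (Suc k) (liftT 0 t) g)"
| "substD k t (DAtom a) = DAtom (substA k t a)"
| "substD k t (DImp g d) = DImp (substG k t g) (substD k t d)"
| "substD k t (DAll d) = DAll (substD (Suc k) (liftT 0 t) d)"
| "substD k t (DChoice d1 d2) = DChoice (substD k t d1) (substD k t d2)"
| "substD k t (DAnd d1 d2) = DAnd (substD k t d1) (substD k t d2)"

inductive ex :: "('f,'p) prog set \<Rightarrow> ('f,'p) goal \<Rightarrow> bool"
and bchain :: "('f,'p) prog \<Rightarrow> ('f,'p) prog set \<Rightarrow> ('f,'p) atm \<Rightarrow> bool" where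
  bc_atom: "bchain (DAtom A) P A"
| bc_imp: "ex P G1 \<Longrightarrow> bchain D P A \<Longrightarrow> bchain (DImp G1 D) P A"
| bc_all: "bchain (substD 0 t D) P A \<Longrightarrow> bchain (DAll D) P A"
| bc_and1: "bchain D0 P A \<Longrightarrow> bchain (DAnd D0 D1) P A"
| bc_and2: "bchain D1 P A \<Longrightarrow> bchain (DAnd D0 D1) P A"
| bc_choice1: "bchain D0 P A \<Longrightarrow> bchain (DChoice D0 D1) P A"
| bc_choice2: "bchain D1 P A \<Longrightarrow> bchain (DChoice D0 D1) P A"
| ex_atom: "D \<in> P \<Longrightarrow> bchain D P A \<Longrightarrow> ex P (GAtom A)"
| ex_and: "ex P G1 \<Longrightarrow> ex P G2 \<Longrightarrow> ex P (GAnd G1 G2)"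
| ex_ex: "ex P (substG 0 t G1) \<Longrightarrow> ex P (GEx G1)"
| ex_assume: "ex (insert D P) G1 \<Longrightarrow> ex P (GAssume D G1)"

datatype ('f, 'p) lform =
    LAtom "('f,'p) atm"
  | LOne | LTop | LZero
  | LTensor "('f,'p) lform" "('f,'p) lform"
  | LWith "('f,'p) lform" "('f,'p) lform"
  | LPlus "('f,'p) lform" "('f,'p) lform"
  | LLolli "('f,'p) lform" "('f,'p) lform"
  | LBang "('f,'p) lform"
  | LAll "('f,'p) lform"
  | LEx "('f,'p) lform"

primrec liftL :: "nat \<Rightarrow> ('f,'p) lform \<Rightarrow> ('f,'p) lform" where
  "liftL k (LAtom a) = LAtom (liftA k a)"
| "liftL k LOne = LOne"
| "liftL k LTop = LTop"
| "liftL k LZero = LZero"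
| "liftL k (LTensor A B) = LTensor (liftL k A) (liftL k B)"
| "liftL k (LWith A B) = LWith (liftL k A) (liftL k B)"
| "liftL k (LPlus A B) = LPlus (liftL k A) (liftL k B)"
| "liftL k (LLolli A B) = LLolli (liftL k A) (liftL k B)"
| "liftL k (LBang A) = LBang (liftL k A)"
| "liftL k (LAll A) = LAll (liftL (Suc k) A)"
| "liftL k (LEx A) = LEx (liftL (Suc k) A)"

primrec substL :: "nat \<Rightarrow> 'f trm \<Rightarrow> ('f,'p) lform \<Rightarrow> ('f,'p) lform" where
  "substL k t (LAtom a) = LAtom (substA k t a)"
| "substL k t LOne = LOne"
| "substL k t LTop = LTop"
| "substL k t LZero = LZero"
| "substL k t (LTensor A B) = LTensor (substL k t A) (substL k t B)"
| "substL k t (LWith A B) = LWith (substL k t A) (substL k t B)"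
| "substL k t (LPlus A B) = LPlus (substL k t A) (substL k t B)"
| "substL k t (LLolli A B) = LLolli (substL k t A) (substL k t B)"
| "substL k t (LBang A) = LBang (substL k t A)"
| "substL k t (LAll A) = LAll (substL (Suc k) (liftT 0 t) A)"
| "substL k t (LEx A) = LEx (substL (Suc k) (liftT 0 t) A)"

text \<open>Sequent calculus for intuitionistic linear logic plus weakening (with cut).
  Contexts are multisets; eigenvariables are handled by lifting the context.\<close>

inductive ial :: "('f,'p) lform multiset \<Rightarrow> ('f,'p) lform \<Rightarrow> bool" (infix "\<turnstile>\<^sub>a" 50) where
  Ax: "{#A#} \<turnstile>\<^sub>a A"
| Cut: "\<Gamma> \<turnstile>\<^sub>a A \<Longrightarrow> \<Delta> + {#A#} \<turnstile>\<^sub>a C \<Longrightarrow> \<Gamma> + \<Delta> \<turnstile>\<^sub>a C"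
| Weak: "\<Gamma> \<turnstile>\<^sub>a C \<Longrightarrow> \<Gamma> + {#A#} \<turnstile>\<^sub>a C"
| Contr: "\<Gamma> + {#LBang A, LBang A#} \<turnstile>\<^sub>a C \<Longrightarrow> \<Gamma> + {#LBang A#} \<turnstile>\<^sub>a C"
| Derel: "\<Gamma> + {#A#} \<turnstile>\<^sub>a C \<Longrightarrow> \<Gamma> + {#LBang A#} \<turnstile>\<^sub>a C"
| Prom: "(\<forall>B \<in># \<Gamma>. \<exists>B'. B = LBang B') \<Longrightarrow> \<Gamma> \<turnstile>\<^sub>a A \<Longrightarrow> \<Gamma> \<turnstile>\<^sub>a LBang A"
| OneR: "{#} \<turnstile>\<^sub>a LOne"
| OneL: "\<Gamma> \<turnstile>\<^sub>a C \<Longrightarrow> \<Gamma> + {#LOne#} \<turnstile>\<^sub>a C"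
| TopR: "\<Gamma> \<turnstile>\<^sub>a LTop"
| ZeroL: "\<Gamma> + {#LZero#} \<turnstile>\<^sub>a C"
| TensorR: "\<Gamma> \<turnstile>\<^sub>a A \<Longrightarrow> \<Delta> \<turnstile>\<^sub>a B \<Longrightarrow> \<Gamma> + \<Delta> \<turnstile>\<^sub>a LTensor A B"
| TensorL: "\<Gamma> + {#A, B#} \<turnstile>\<^sub>a C \<Longrightarrow> \<Gamma> + {#LTensor A B#} \<turnstile>\<^sub>a C"
| WithR: "\<Gamma> \<turnstile>\<^sub>a A \<Longrightarrow> \<Gamma> \<turnstile>\<^sub>a B \<Longrightarrow> \<Gamma> \<turnstile>\<^sub>a LWith A B"
| WithL1: "\<Gamma> + {#A#} \<turnstile>\<^sub>a C \<Longrightarrow> \<Gamma> + {#LWith A B#} \<turnstile>\<^sub>a C"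
| WithL2: "\<Gamma> + {#B#} \<turnstile>\<^sub>a C \<Longrightarrow> \<Gamma> + {#LWith A B#} \<turnstile>\<^sub>a C"
| PlusR1: "\<Gamma> \<turnstile>\<^sub>a A \<Longrightarrow> \<Gamma> \<turnstile>\<^sub>a LPlus A B"
| PlusR2: "\<Gamma> \<turnstile>\<^sub>a B \<Longrightarrow> \<Gamma> \<turnstile>\<^sub>a LPlus A B"
| PlusL: "\<Gamma> + {#A#} \<turnstile>\<^sub>a C \<Longrightarrow> \<Gamma> + {#B#} \<turnstile>\<^sub>a C \<Longrightarrow> \<Gamma> + {#LPlus A B#} \<turnstile>\<^sub>a C"
| LolliR: "\<Gamma> + {#A#} \<turnstile>\<^sub>a B \<Longrightarrow> \<Gamma> \<turnstile>\<^sub>a LLolli A B"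
| LolliL: "\<Gamma> \<turnstile>\<^sub>a A \<Longrightarrow> \<Delta> + {#B#} \<turnstile>\<^sub>a C \<Longrightarrow> \<Gamma> + \<Delta> + {#LLolli A B#} \<turnstile>\<^sub>a C"
| AllR: "image_mset (liftL 0) \<Gamma> \<turnstile>\<^sub>a A \<Longrightarrow> \<Gamma> \<turnstile>\<^sub>a LAll A"
| AllL: "\<Gamma> + {#substL 0 t A#} \<turnstile>\<^sub>a C \<Longrightarrow> \<Gamma> + {#LAll A#} \<turnstile>\<^sub>a C"
| ExR: "\<Gamma> \<turnstile>\<^sub>a substL 0 t A \<Longrightarrow> \<Gamma> \<turnstile>\<^sub>a LEx A"
| ExL: "image_mset (liftL 0) \<Gamma> + {#A#} \<turnstile>\<^sub>a liftL 0 C \<Longrightarrow> \<Gamma> + {#LEx A#} \<turnstile>\<^sub>a C"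

primrec trG :: "('f,'p) goal \<Rightarrow> ('f,'p) lform"
and trD :: "('f,'p) prog \<Rightarrow> ('f,'p) lform" where
  "trG (GAtom a) = LAtom a"
| "trG (GAnd g1 g2) = LTensor (trG g1) (trG g2)"
| "trG (GAssume d g) = LLolli (LBang (trD d)) (trG g)"
| "trG (GEx g) = LEx (trG g)"
| "trD (DAtom a) = LAtom a"
| "trD (DImp g d) = LLolli (trG g) (trD d)"
| "trD (DAll d) = LAll (trD d)"
| "trD (DChoice d1 d2) = LWith (trD d1) (trD d2)"
| "trD (DAnd d1 d2) = LTensor (trD d1) (trD d2)"

end

theory Submission
  imports Defs
begin

primrec sT :: "(nat \<Rightarrow> 'f trm) \<Rightarrow> 'f trm \<Rightarrow> 'f trm" where
  "sT r (V i) = r i"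
| "sT r (Fn f ts) = Fn f (map (sT r) ts)"

primrec sA :: "(nat \<Rightarrow> 'f trm) \<Rightarrow> ('f,'p) atm \<Rightarrow> ('f,'p) atm" where
  "sA r (Atm p ts) = Atm p (map (sT r) ts)"

definition scons :: "'f trm \<Rightarrow> (nat \<Rightarrow> 'f trm) \<Rightarrow> nat \<Rightarrow> 'f trm" where
  "scons t r = (\<lambda>i. case i of 0 \<Rightarrow> t | Suc j \<Rightarrow> r j)"

primrec sem :: "('f,'p) prog set \<Rightarrow> (nat \<Rightarrow> 'f trm) \<Rightarrow> ('f,'p) lform \<Rightarrow> bool" where
  "sem P r (LAtom a) = ex P (GAtom (sA r a))"
| "sem P r LOne = True"
| "sem P r LTop = True"
| "sem P r LZero = False"
| "sem P r (LTensor A B) = (sem P r A \<and> sem P r B)"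
| "sem P r (LWith A B) = (sem P r A \<and> sem P r B)"
| "sem P r (LPlus A B) = (sem P r A \<or> sem P r B)"
| "sem P r (LLolli A B) = (\<forall>Q. P \<subseteq> Q \<longrightarrow> sem Q r A \<longrightarrow> sem Q r B)"
| "sem P r (LBang A) = sem P r A"
| "sem P r (LAll A) = (\<forall>t. sem P (scons t r) A)"
| "sem P r (LEx A) = (\<exists>t. sem P (scons t r) A)"

lemma sT_liftT: "sT r (liftT k s) = sT (\<lambda>i. if i < k then r i else r (Suc i)) s"
  by (induction s) auto

lemma sT_substT: "sT r (substT k t s) = sT (\<lambda>i. if i < k then r i else if i = k then sT r t else r (i - 1)) s"
  by (induction s) auto

lemma sT_V: "sT V s = s"
  by (induction s) (auto simp: map_idI)

lemma sA_V: "sA V a = a"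
  by (cases a) (simp add: sT_V map_idI)

lemma sem_liftL: "sem P r (liftL k A) = sem P (\<lambda>i. if i < k then r i else r (Suc i)) A"
proof (induction A arbitrary: P r k)
  case (LAtom x)
  then show ?case by (cases x) (simp add: sT_liftT comp_def)
next
  case (LAll A)
  have e: "\<And>t. scons t (\<lambda>i. if i < k then r i else r (Suc i)) = (\<lambda>i. if i < Suc k then scons t r i else scons t r (Suc i))"
    by (rule ext) (auto simp: scons_def split: nat.split)
  show ?case using LAll by (simp add: e)
next
  case (LEx A)
  have e: "\<And>t. scons t (\<lambda>i. if i < k then r i else r (Suc i)) = (\<lambda>i. if i < Suc k then scons t r i else scons t r (Suc i))"
    by (rule ext) (auto simp: scons_def split: nat.split)
  show ?case using LEx by (simp add: e)
qed auto

lemma sem_substL: "sem P r (substL k t A) = sem P (\<lambda>i. if i < k then r i else if i = k then sT r t else r (i - 1)) A"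
proof (induction A arbitrary: P r k t)
  case (LAtom x)
  then show ?case by (cases x) (simp add: sT_substT comp_def)
next
  case (LAll A)
  have e: "\<And>u. (\<lambda>i. if i < Suc k then scons u r i else if i = Suc k then sT (scons u r) (liftT 0 t) else scons u r (i - 1))
     = scons u (\<lambda>i. if i < k then r i else if i = k then sT r t else r (i - 1))"
    by (rule ext) (auto simp: scons_def sT_liftT split: nat.split)
  show ?case using LAll by (simp add: e)
next
  case (LEx A)
  have e: "\<And>u. (\<lambda>i. if i < Suc k then scons u r i else if i = Suc k then sT (scons u r) (liftT 0 t) else scons u r (i - 1))
     = scons u (\<lambda>i. if i < k then r i else if i = k then sT r t else r (i - 1))"
    by (rule ext) (auto simp: scons_def sT_liftT split: nat.split)
  show ?case using LEx by (simp add: e)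
qed auto

lemma sem_lift0: "sem P (scons t r) (liftL 0 A) = sem P r A"
proof -
  have "(\<lambda>i. if i < 0 then scons t r i else scons t r (Suc i)) = r"
    by (rule ext) (simp add: scons_def)
  then show ?thesis by (simp add: sem_liftL)
qed

lemma sem_subst0: "sem P r (substL 0 t A) = sem P (scons (sT r t) r) A"
proof -
  have "(\<lambda>i. if i < 0 then r i else if i = 0 then sT r t else r (i - 1)) = scons (sT r t) r"
    by (rule ext) (auto simp: scons_def split: nat.split)
  then show ?thesis by (simp add: sem_substL)
qed

lemma sem_subst0V: "sem P V (substL 0 t A) = sem P (scons t V) A"
  by (simp add: sem_subst0 sT_V)

lemma ex_bchain_mono:
  "(ex P G \<longrightarrow> (\<forall>Q. P \<subseteq> Q \<longrightarrow> ex Q G)) \<and> (bchain D P A \<longrightarrow> (\<forall>Q. P \<subseteq> Q \<longrightarrow> bchain D Q A))"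
proof (induction rule: ex_bchain.induct)
  case (ex_assume D P G1)
  show ?case
  proof (intro allI impI)
    fix Q assume "P \<subseteq> Q"
    then have "insert D P \<subseteq> insert D Q" by blast
    with ex_assume.IH have "ex (insert D Q) G1" by blast
    then show "ex Q (GAssume D G1)" by (rule ex_bchain.intros(11))
  qed
next
  case (bc_atom A P) then show ?case by (blast intro: ex_bchain.intros(1))
next
  case (bc_imp P G1 D A) then show ?case by (blast intro: ex_bchain.intros(2))
next
  case (bc_all t D P A) then show ?case by (blast intro: ex_bchain.intros(3))
next
  case (bc_and1 D0 P A D1) then show ?case by (blast intro: ex_bchain.intros(4))
next
  case (bc_and2 D1 P A D0) then show ?case by (blast intro: ex_bchain.intros(5))
next
  case (bc_choice1 D0 P A D1) then show ?case by (blast intro: ex_bchain.intros(6))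
next
  case (bc_choice2 D1 P A D0) then show ?case by (blast intro: ex_bchain.intros(7))
next
  case (ex_atom D P A) then show ?case by (blast intro: ex_bchain.intros(8))
next
  case (ex_and P G1 G2) then show ?case by (blast intro: ex_bchain.intros(9))
next
  case (ex_ex P t G1) then show ?case by (blast intro: ex_bchain.intros(10))
qed

lemma ex_mono: "ex P G \<Longrightarrow> P \<subseteq> Q \<Longrightarrow> ex Q G"
  using ex_bchain_mono by blast

lemma bchain_mono: "bchain D P A \<Longrightarrow> P \<subseteq> Q \<Longrightarrow> bchain D Q A"
  using ex_bchain_mono by blast

lemma sem_mono: "sem P r A \<Longrightarrow> P \<subseteq> Q \<Longrightarrow> sem Q r A"
proof (induction A arbitrary: P Q r)
  case (LAtom x) then show ?case by (auto intro: ex_mono)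
next
  case (LLolli A B) then show ?case by (simp; meson order_trans)
next
  case (LTensor A B) then show ?case by (simp; blast)
next
  case (LWith A B) then show ?case by (simp; blast)
next
  case (LPlus A B) then show ?case by auto
next
  case (LBang A) then show ?case by (simp; blast)
next
  case (LAll A) then show ?case by (simp; blast)
next
  case (LEx A) then show ?case by (simp; blast)
qed auto

section \<open>Soundness of the sequent calculus\<close>

definition valid where "valid \<Gamma> C = (\<forall>P r. (\<forall>B\<in>#\<Gamma>. sem P r B) \<longrightarrow> sem P r C)"

lemma ial_valid: "\<Gamma> \<turnstile>\<^sub>a C \<Longrightarrow> valid \<Gamma> C"
proof (induction rule: ial.induct)
  case (Ax A) then show ?case unfolding valid_def by simp
next
  case (Cut \<Gamma> A \<Delta> C) then show ?case unfolding valid_def by (simp; blast?)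
next
  case (Weak \<Gamma> C A) then show ?case unfolding valid_def by simp
next
  case (Contr \<Gamma> A C) then show ?case unfolding valid_def by simp
next
  case (Derel \<Gamma> A C) then show ?case unfolding valid_def by simp
next
  case (Prom \<Gamma> A) then show ?case unfolding valid_def by simp
next
  case OneR then show ?case unfolding valid_def by simp
next
  case (OneL \<Gamma> C) then show ?case unfolding valid_def by simp
next
  case (TopR \<Gamma>) then show ?case unfolding valid_def by simp
next
  case (ZeroL \<Gamma> C) then show ?case unfolding valid_def by simp
next
  case (TensorR \<Gamma> A \<Delta> B) then show ?case unfolding valid_def by simp
next
  case (TensorL \<Gamma> A B C) then show ?case unfolding valid_def by simp
next
  case (WithR \<Gamma> A B) then show ?case unfolding valid_def by simp
next
  case (WithL1 \<Gamma> A C B) then show ?case unfolding valid_def by simp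
next
  case (WithL2 \<Gamma> B C A) then show ?case unfolding valid_def by simp
next
  case (PlusR1 \<Gamma> A B) then show ?case unfolding valid_def by simp
next
  case (PlusR2 \<Gamma> B A) then show ?case unfolding valid_def by simp
next
  case (PlusL \<Gamma> A C B) then show ?case unfolding valid_def by (simp; blast?)
next
  case (LolliR \<Gamma> A B)
  then show ?case unfolding valid_def by simp (meson sem_mono)
next
  case (LolliL \<Gamma> A \<Delta> B C) then show ?case unfolding valid_def by (simp; blast?)
next
  case (AllR \<Gamma> A)
  then show ?case unfolding valid_def by (simp add: sem_lift0)
next
  case (AllL \<Gamma> t A C)
  then show ?case unfolding valid_def by (simp add: sem_subst0)
next
  case (ExR \<Gamma> t A)
  then show ?case unfolding valid_def by (simp add: sem_subst0; blast?)
next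
  case (ExL \<Gamma> A C)
  show ?case unfolding valid_def
  proof (intro allI impI)
    fix P r assume h: "\<forall>B\<in>#\<Gamma> + {#LEx A#}. sem P r B"
    then obtain t where t: "sem P (scons t r) A" by auto
    have "\<forall>B\<in>#image_mset (liftL 0) \<Gamma> + {#A#}. sem P (scons t r) B"
      using h t by (auto simp: sem_lift0)
    then have "sem P (scons t r) (liftL 0 C)" using ExL.IH unfolding valid_def by blast
    then show "sem P r C" by (simp add: sem_lift0)
  qed
qed


section \<open>Canonical model: execution agrees with semantics\<close>

primrec gsz :: "('f,'p) goal \<Rightarrow> nat" and dsz :: "('f,'p) prog \<Rightarrow> nat" where
  "gsz (GAtom a) = 1"
| "gsz (GAnd g1 g2) = Suc (gsz g1 + gsz g2)"
| "gsz (GAssume d g) = Suc (dsz d + gsz g)"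
| "gsz (GEx g) = Suc (gsz g)"
| "dsz (DAtom a) = 1"
| "dsz (DImp g d) = Suc (gsz g + dsz d)"
| "dsz (DAll d) = Suc (dsz d)"
| "dsz (DChoice d1 d2) = Suc (dsz d1 + dsz d2)"
| "dsz (DAnd d1 d2) = Suc (dsz d1 + dsz d2)"

lemma sz_subst: fixes G :: "('f,'p) goal" and D :: "('f,'p) prog" shows "gsz (substG k t G) = gsz G" "dsz (substD k t D) = dsz D"
  by (induction G and D arbitrary: k t and k t) auto

lemma tr_subst: fixes G :: "('f,'p) goal" and D :: "('f,'p) prog" shows "trG (substG k t G) = substL k t (trG G)" "trD (substD k t D) = substL k t (trD D)"
  by (induction G and D arbitrary: k t and k t) auto

inductive_cases exGAtomE: "ex P (GAtom A)"
lemma ex_GAtom: "ex P (GAtom A) = (\<exists>D\<in>P. bchain D P A)"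
  by (auto intro: ex_atom elim: exGAtomE)
inductive_cases exGAndE: "ex P (GAnd g1 g2)"
lemma ex_GAnd: "ex P (GAnd g1 g2) = (ex P g1 \<and> ex P g2)"
  by (auto intro: ex_and elim: exGAndE)
inductive_cases exGExE: "ex P (GEx g)"
lemma ex_GEx: "ex P (GEx g) = (\<exists>t. ex P (substG 0 t g))"
  by (auto intro: ex_ex elim: exGExE)
inductive_cases exGAssumeE: "ex P (GAssume d g)"
lemma ex_GAssume: "ex P (GAssume d g) = ex (insert d P) g"
  by (auto intro: ex_assume elim: exGAssumeE)
inductive_cases bcAtomE: "bchain (DAtom a) P A"
lemma bc_DAtom: "bchain (DAtom a) P A = (A = a)"
  by (auto intro: bc_atom elim: bcAtomE)
inductive_cases bcImpE: "bchain (DImp g d) P A"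
lemma bc_DImp: "bchain (DImp g d) P A = (ex P g \<and> bchain d P A)"
  by (auto intro: bc_imp elim: bcImpE)
inductive_cases bcAllE: "bchain (DAll d) P A"
lemma bc_DAll: "bchain (DAll d) P A = (\<exists>t. bchain (substD 0 t d) P A)"
  by (auto intro: bc_all elim: bcAllE)
inductive_cases bcAndE: "bchain (DAnd d0 d1) P A"
lemma bc_DAnd: "bchain (DAnd d0 d1) P A = (bchain d0 P A \<or> bchain d1 P A)"
  by (auto intro: bc_and1 bc_and2 elim: bcAndE)
inductive_cases bcChoiceE: "bchain (DChoice d0 d1) P A"
lemma bc_DChoice: "bchain (DChoice d0 d1) P A = (bchain d0 P A \<or> bchain d1 P A)"
  by (auto intro: bc_choice1 bc_choice2 elim: bcChoiceE)

definition HD where "HD D Q = (\<forall>Q'. Q \<subseteq> Q' \<longrightarrow> (\<forall>A. bchain D Q' A \<longrightarrow> ex Q' (GAtom A)))"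

lemma elim_gen:
  "(ex P0 G \<longrightarrow> (\<forall>Q. P0 = insert D Q \<longrightarrow> HD D Q \<longrightarrow> ex Q G)) \<and>
   (bchain D' P0 A \<longrightarrow> (\<forall>Q. P0 = insert D Q \<longrightarrow> HD D Q \<longrightarrow> bchain D' Q A))"
proof (induction rule: ex_bchain.induct)
  case (ex_atom D'' P A)
  show ?case
  proof (intro allI impI)
    fix Q assume q: "P = insert D Q" "HD D Q"
    have b: "bchain D'' Q A" using ex_atom q by blast
    show "ex Q (GAtom A)"
    proof (cases "D'' = D")
      case True then show ?thesis using b q(2) unfolding HD_def by blast
    next
      case False then show ?thesis using b q(1) ex_atom(1) by (blast intro: ex_bchain.intros(8))
    qed
  qed
next
  case (ex_assume D' P G1)
  show ?case
  proof (intro allI impI)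
    fix Q assume q: "P = insert D Q" "HD D Q"
    have "HD D (insert D' Q)" using q(2) unfolding HD_def by blast
    moreover have "insert D' P = insert D (insert D' Q)" using q(1) by blast
    ultimately have "ex (insert D' Q) G1" using ex_assume.IH by blast
    then show "ex Q (GAssume D' G1)" by (rule ex_bchain.intros)
  qed
next
  case (bc_atom A P) then show ?case by (blast intro: ex_bchain.intros(1))
next
  case (bc_imp P G1 D A) then show ?case by (blast intro: ex_bchain.intros(2))
next
  case (bc_all t D P A) then show ?case by (blast intro: ex_bchain.intros(3))
next
  case (bc_and1 D0 P A D1) then show ?case by (blast intro: ex_bchain.intros(4))
next
  case (bc_and2 D1 P A D0) then show ?case by (blast intro: ex_bchain.intros(5))
next
  case (bc_choice1 D0 P A D1) then show ?case by (blast intro: ex_bchain.intros(6))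
next
  case (bc_choice2 D1 P A D0) then show ?case by (blast intro: ex_bchain.intros(7))
next
  case (ex_and P G1 G2) then show ?case by (blast intro: ex_bchain.intros(9))
next
  case (ex_ex P t G1) then show ?case by (blast intro: ex_bchain.intros(10))
qed

lemma elim_ex: "ex (insert D Q) G \<Longrightarrow> HD D Q \<Longrightarrow> ex Q G"
  using elim_gen by blast

lemma key:
  "\<forall>(G::('f,'p) goal) D P. (gsz G < n \<longrightarrow> (ex P G \<longleftrightarrow> sem P V (trG G))) \<and>
     (dsz D < n \<longrightarrow> (HD D P \<longrightarrow> sem P V (trD D)) \<and> (sem P V (trD D) \<longrightarrow> (\<forall>A. bchain D P A \<longrightarrow> ex P (GAtom A))))"
proof (induction n)
  case 0 then show ?case by simp
next
  case (Suc n)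
  have IHa: "ex P G \<longleftrightarrow> sem P V (trG G)" if "gsz G < n" for G :: "('f,'p) goal" and P
    using Suc.IH[THEN spec[of _ G], THEN spec[of _ undefined], THEN spec[of _ P], THEN conjunct1] that by (rule mp)
  have IHbc: "(HD D P \<longrightarrow> sem P V (trD D)) \<and> (sem P V (trD D) \<longrightarrow> (\<forall>A. bchain D P A \<longrightarrow> ex P (GAtom A)))" if "dsz D < n" for D :: "('f,'p) prog" and P
    using Suc.IH[THEN spec[of _ undefined], THEN spec[of _ D], THEN spec[of _ P], THEN conjunct2] that by (rule mp)
  have IHb: "sem P V (trD D)" if "dsz D < n" "HD D P" for D :: "('f,'p) prog" and P
    using IHbc[OF that(1)] that(2) by blast
  have IHc: "ex P (GAtom A)" if "dsz D < n" "sem P V (trD D)" "bchain D P A" for D :: "('f,'p) prog" and P A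
    using IHbc[OF that(1)] that(2,3) by blast
  have a: "ex P G \<longleftrightarrow> sem P V (trG G)" if "gsz G < Suc n" for G :: "('f,'p) goal" and P
  proof (cases G)
    case (GAtom x1) then show ?thesis by (simp add: sA_V)
  next
    case (GAnd g1 g2) then show ?thesis using that IHa[of g1] IHa[of g2] by (simp add: ex_GAnd)
  next
    case (GEx g)
    have "ex P (substG 0 t g) \<longleftrightarrow> sem P (scons t V) (trG g)" for t
      using IHa[of "substG 0 t g" P] that GEx by (simp add: sz_subst tr_subst sem_subst0V)
    then show ?thesis using GEx by (simp add: ex_GEx)
  next
    case (GAssume d g)
    have dl: "dsz d < n" and gl: "gsz g < n" using that GAssume by auto
    show ?thesis
    proof
      assume "ex P G"
      then have e: "ex (insert d P) g" using GAssume by (simp add: ex_GAssume)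
      show "sem P V (trG G)" unfolding GAssume
      proof (simp, intro allI impI)
        fix Q assume q: "P \<subseteq> Q" "sem Q V (trD d)"
        have "ex (insert d Q) g" using e q(1) ex_mono by blast
        moreover have "HD d Q" unfolding HD_def
        proof (intro allI impI)
          fix Q' A assume "Q \<subseteq> Q'" "bchain d Q' A"
          moreover have "sem Q' V (trD d)" using sem_mono q(2) calculation(1) by blast
          ultimately show "ex Q' (GAtom A)" using IHc[OF dl] by blast
        qed
        ultimately have "ex Q g" by (rule elim_ex)
        then show "sem Q V (trG g)" using IHa[OF gl] by blast
      qed
    next
      assume s: "sem P V (trG G)"
      have "HD d (insert d P)" unfolding HD_def by (blast intro: ex_atom)
      then have "sem (insert d P) V (trD d)" using IHb[OF dl] by blast
      then have "sem (insert d P) V (trG g)" using s GAssume by auto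
      then have "ex (insert d P) g" using IHa[OF gl] by blast
      then show "ex P G" using GAssume by (simp add: ex_GAssume)
    qed
  qed
  have b: "sem P V (trD D)" if "dsz D < Suc n" "HD D P" for D :: "('f,'p) prog" and P
  proof (cases D)
    case (DAtom x1) then show ?thesis using that by (simp add: sA_V HD_def bc_DAtom)
  next
    case (DImp g d)
    have dl: "dsz d < n" and gl: "gsz g < n" using that DImp by auto
    show ?thesis unfolding DImp
    proof (simp, intro allI impI)
      fix Q assume q: "P \<subseteq> Q" "sem Q V (trG g)"
      have eg: "ex Q g" using q(2) IHa[OF gl] by blast
      have "HD d Q" unfolding HD_def
      proof (intro allI impI)
        fix Q' A assume "Q \<subseteq> Q'" "bchain d Q' A"
        moreover have "ex Q' g" using eg ex_mono calculation(1) by blast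
        ultimately have "bchain (DImp g d) Q' A" by (blast intro: bc_imp)
        moreover have "P \<subseteq> Q'" using q(1) \<open>Q \<subseteq> Q'\<close> by blast
        ultimately show "ex Q' (GAtom A)" using that(2) DImp unfolding HD_def by blast
      qed
      then show "sem Q V (trD d)" using IHb[OF dl] by blast
    qed
  next
    case (DAll d)
    have "sem P (scons t V) (trD d)" for t
    proof -
      have "HD (substD 0 t d) P" using that(2) DAll unfolding HD_def by (blast intro: bc_all)
      then have "sem P V (trD (substD 0 t d))" using IHb[of "substD 0 t d" P] that DAll by (simp add: sz_subst)
      then show ?thesis by (simp add: tr_subst sem_subst0V)
    qed
    then show ?thesis using DAll by simp
  next
    case (DChoice d1 d2)
    have "HD d1 P" "HD d2 P" using that(2) DChoice unfolding HD_def by (blast intro: bc_choice1 bc_choice2)+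
    then show ?thesis using IHb[of d1 P] IHb[of d2 P] that DChoice by simp
  next
    case (DAnd d1 d2)
    have "HD d1 P" "HD d2 P" using that(2) DAnd unfolding HD_def by (blast intro: bc_and1 bc_and2)+
    then show ?thesis using IHb[of d1 P] IHb[of d2 P] that DAnd by simp
  qed
  have c: "ex P (GAtom A)" if "dsz D < Suc n" "sem P V (trD D)" "bchain D P A" for D :: "('f,'p) prog" and P A
  proof (cases D)
    case (DAtom x1) then show ?thesis using that by (simp add: sA_V bc_DAtom)
  next
    case (DImp g d)
    have dl: "dsz d < n" and gl: "gsz g < n" using that DImp by auto
    have eg: "ex P g" and bd: "bchain d P A" using that(3) DImp by (auto simp: bc_DImp)
    have "sem P V (trG g)" using eg IHa[OF gl] by blast
    then have "sem P V (trD d)" using that(2) DImp by auto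
    then show ?thesis using IHc[OF dl _ bd] by blast
  next
    case (DAll d)
    obtain t where bt: "bchain (substD 0 t d) P A" using \<open>bchain D P A\<close> DAll by (auto simp: bc_DAll)
    have "sem P (scons t V) (trD d)" using \<open>sem P V (trD D)\<close> DAll by simp
    then have "sem P V (trD (substD 0 t d))" by (simp add: tr_subst sem_subst0V)
    then show ?thesis using IHc[OF _ _ bt] \<open>dsz D < Suc n\<close> DAll by (simp add: sz_subst)
  next
    case (DChoice d1 d2)
    then show ?thesis using that IHc[of d1 P A] IHc[of d2 P A] by (auto simp: bc_DChoice)
  next
    case (DAnd d1 d2)
    then show ?thesis using that IHc[of d1 P A] IHc[of d2 P A] by (auto simp: bc_DAnd)
  qed
  show ?case using a b c by blast
qed

lemma sem_iff_ex: "ex P G \<longleftrightarrow> sem P V (trG G)"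
proof -
  have "gsz G < Suc (gsz G) \<longrightarrow> (ex P G \<longleftrightarrow> sem P V (trG G))"
    using key[of "Suc (gsz G)", THEN spec[of _ G], THEN spec[of _ undefined], THEN spec[of _ P], THEN conjunct1] .
  then show ?thesis by simp
qed

lemma sem_prog: assumes "D \<in> P" shows "sem P V (trD D)"
proof -
  have h: "HD D P" unfolding HD_def using assms by (blast intro: ex_atom)
  have "dsz D < Suc (dsz D) \<longrightarrow> (HD D P \<longrightarrow> sem P V (trD D)) \<and> (sem P V (trD D) \<longrightarrow> (\<forall>A. bchain D P A \<longrightarrow> ex P (GAtom A)))"
    using key[of "Suc (dsz D)", THEN spec[of _ undefined], THEN spec[of _ D], THEN spec[of _ P], THEN conjunct2] .
  then show ?thesis using h by simp
qed


section \<open>Execution yields derivations\<close>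

lemma Weak': "\<Gamma> \<turnstile>\<^sub>a C \<Longrightarrow> add_mset A \<Gamma> \<turnstile>\<^sub>a C"
  using Weak by fastforce
lemma Contr': "add_mset (LBang A) (add_mset (LBang A) \<Gamma>) \<turnstile>\<^sub>a C \<Longrightarrow> add_mset (LBang A) \<Gamma> \<turnstile>\<^sub>a C"
  using Contr[of \<Gamma> A C] by simp
lemma Derel': "add_mset A \<Gamma> \<turnstile>\<^sub>a C \<Longrightarrow> add_mset (LBang A) \<Gamma> \<turnstile>\<^sub>a C"
  using Derel[of \<Gamma> A C] by simp
lemma TensorL': "add_mset A (add_mset B \<Gamma>) \<turnstile>\<^sub>a C \<Longrightarrow> add_mset (LTensor A B) \<Gamma> \<turnstile>\<^sub>a C"
  using TensorL[of \<Gamma> A B C] by simp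
lemma WithL1': "add_mset A \<Gamma> \<turnstile>\<^sub>a C \<Longrightarrow> add_mset (LWith A B) \<Gamma> \<turnstile>\<^sub>a C"
  using WithL1[of \<Gamma> A C B] by simp
lemma WithL2': "add_mset B \<Gamma> \<turnstile>\<^sub>a C \<Longrightarrow> add_mset (LWith A B) \<Gamma> \<turnstile>\<^sub>a C"
  using WithL2[of \<Gamma> B C A] by simp
lemma LolliR': "add_mset A \<Gamma> \<turnstile>\<^sub>a B \<Longrightarrow> \<Gamma> \<turnstile>\<^sub>a LLolli A B"
  using LolliR[of \<Gamma> A B] by simp
lemma LolliL': "\<Gamma> \<turnstile>\<^sub>a A \<Longrightarrow> add_mset B \<Delta> \<turnstile>\<^sub>a C \<Longrightarrow> add_mset (LLolli A B) (\<Gamma> + \<Delta>) \<turnstile>\<^sub>a C"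
  using LolliL[of \<Gamma> A \<Delta> B C] by simp
lemma AllL': "add_mset (substL 0 t A) \<Gamma> \<turnstile>\<^sub>a C \<Longrightarrow> add_mset (LAll A) \<Gamma> \<turnstile>\<^sub>a C"
  using AllL[of \<Gamma> t A C] by simp

lemma weak_all: "\<Gamma> \<turnstile>\<^sub>a C \<Longrightarrow> \<Gamma> + \<Delta> \<turnstile>\<^sub>a C"
proof (induction \<Delta>)
  case empty then show ?case by simp
next
  case (add x \<Delta>) then show ?case using Weak'[of "\<Gamma> + \<Delta>" C x] by simp
qed

lemma cbang: "(\<forall>B\<in>#\<Delta>. \<exists>B'. B = LBang B') \<Longrightarrow> \<Gamma> + \<Delta> + \<Delta> \<turnstile>\<^sub>a C \<Longrightarrow> \<Gamma> + \<Delta> \<turnstile>\<^sub>a C"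
proof (induction \<Delta> arbitrary: \<Gamma>)
  case empty then show ?case by simp
next
  case (add x \<Delta>)
  then obtain y where y: "x = LBang y" by auto
  have "add_mset x (add_mset x \<Gamma>) + \<Delta> + \<Delta> = \<Gamma> + add_mset x \<Delta> + add_mset x \<Delta>" by simp
  then have "add_mset x (add_mset x \<Gamma>) + \<Delta> + \<Delta> \<turnstile>\<^sub>a C" using add.prems(2) by simp
  then have "add_mset x (add_mset x \<Gamma>) + \<Delta> \<turnstile>\<^sub>a C" using add.IH[of "add_mset x (add_mset x \<Gamma>)"] add.prems(1) by simp
  then have "add_mset (LBang y) (add_mset (LBang y) (\<Gamma> + \<Delta>)) \<turnstile>\<^sub>a C" using y by simp
  then have "add_mset (LBang y) (\<Gamma> + \<Delta>) \<turnstile>\<^sub>a C" by (rule Contr')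
  then show ?case using y by simp
qed

abbreviation GP :: "('f,'p) prog set \<Rightarrow> ('f,'p) lform multiset" where
  "GP P \<equiv> image_mset (\<lambda>D. LBang (trD D)) (mset_set P)"

lemma GP_bang: "\<forall>B\<in>#GP P. \<exists>B'. B = LBang B'"
  by auto

lemma synt:
  "(ex P G \<longrightarrow> finite P \<longrightarrow> GP P \<turnstile>\<^sub>a trG G) \<and>
   (bchain D P A \<longrightarrow> finite P \<longrightarrow> add_mset (trD D) (GP P) \<turnstile>\<^sub>a LAtom A)"
proof (induction rule: ex_bchain.induct)
  case (bc_atom A P)
  show ?case using weak_all[OF Ax[of "LAtom A"], of "GP P"] by simp
next
  case (bc_imp P G1 D A)
  show ?case
  proof
    assume f: "finite P"
    have "add_mset (LLolli (trG G1) (trD D)) (GP P + GP P) \<turnstile>\<^sub>a LAtom A"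
      using bc_imp f by (blast intro: LolliL')
    then have "{#LLolli (trG G1) (trD D)#} + GP P + GP P \<turnstile>\<^sub>a LAtom A" by simp
    then have "{#LLolli (trG G1) (trD D)#} + GP P \<turnstile>\<^sub>a LAtom A" by (rule cbang[OF GP_bang])
    then show "add_mset (trD (DImp G1 D)) (GP P) \<turnstile>\<^sub>a LAtom A" by simp
  qed
next
  case (bc_all t D P A)
  then show ?case by (auto simp: tr_subst intro: AllL')
next
  case (bc_and1 D0 P A D1)
  show ?case
  proof
    assume f: "finite P"
    have "add_mset (trD D1) (add_mset (trD D0) (GP P)) \<turnstile>\<^sub>a LAtom A"
      using bc_and1 f by (blast intro: Weak')
    then have "add_mset (trD D0) (add_mset (trD D1) (GP P)) \<turnstile>\<^sub>a LAtom A"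
      by (simp add: add_mset_commute)
    then show "add_mset (trD (DAnd D0 D1)) (GP P) \<turnstile>\<^sub>a LAtom A" by (simp add: TensorL')
  qed
next
  case (bc_and2 D1 P A D0)
  show ?case
  proof
    assume f: "finite P"
    have "add_mset (trD D0) (add_mset (trD D1) (GP P)) \<turnstile>\<^sub>a LAtom A"
      using bc_and2 f by (blast intro: Weak')
    then show "add_mset (trD (DAnd D0 D1)) (GP P) \<turnstile>\<^sub>a LAtom A" by (simp add: TensorL')
  qed
next
  case (bc_choice1 D0 P A D1)
  then show ?case by (auto intro: WithL1')
next
  case (bc_choice2 D1 P A D0)
  then show ?case by (auto intro: WithL2')
next
  case (ex_atom D P A)
  show ?case
  proof
    assume f: "finite P"
    have e: "GP P = add_mset (LBang (trD D)) (GP (P - {D}))"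
      using f ex_atom(1) by (simp add: mset_set.remove)
    have "add_mset (LBang (trD D)) (GP P) \<turnstile>\<^sub>a LAtom A"
      using ex_atom f by (blast intro: Derel')
    then have "add_mset (LBang (trD D)) (add_mset (LBang (trD D)) (GP (P - {D}))) \<turnstile>\<^sub>a LAtom A"
      using e by simp
    then have "add_mset (LBang (trD D)) (GP (P - {D})) \<turnstile>\<^sub>a LAtom A" by (rule Contr')
    then show "GP P \<turnstile>\<^sub>a trG (GAtom A)" using e by simp
  qed
next
  case (ex_and P G1 G2)
  show ?case
  proof
    assume f: "finite P"
    have "GP P + GP P \<turnstile>\<^sub>a LTensor (trG G1) (trG G2)"
      using ex_and f by (blast intro: TensorR)
    then have "{#} + GP P + GP P \<turnstile>\<^sub>a LTensor (trG G1) (trG G2)" by simp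
    then have "{#} + GP P \<turnstile>\<^sub>a LTensor (trG G1) (trG G2)" by (rule cbang[OF GP_bang])
    then show "GP P \<turnstile>\<^sub>a trG (GAnd G1 G2)" by simp
  qed
next
  case (ex_ex P t G1)
  then show ?case by (auto simp: tr_subst intro: ExR)
next
  case (ex_assume D P G1)
  show ?case
  proof
    assume f: "finite P"
    have h: "GP (insert D P) \<turnstile>\<^sub>a trG G1" using ex_assume f by simp
    have "add_mset (LBang (trD D)) (GP P) \<turnstile>\<^sub>a trG G1"
    proof (cases "D \<in> P")
      case True then show ?thesis using h Weak' by (simp add: insert_absorb)
    next
      case False then show ?thesis using h f by simp
    qed
    then show "GP P \<turnstile>\<^sub>a trG (GAssume D G1)" by (simp add: LolliR')
  qed
qed

theorem mainTheorem1:
  fixes P :: "('f,'p) prog set" and G :: "('f,'p) goal"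
  assumes "finite P"
  shows "ex P G \<longleftrightarrow> image_mset (\<lambda>D. LBang (trD D)) (mset_set P) \<turnstile>\<^sub>a trG G"
proof
  assume "ex P G"
  then show "image_mset (\<lambda>D. LBang (trD D)) (mset_set P) \<turnstile>\<^sub>a trG G"
    using synt assms by blast
next
  assume "image_mset (\<lambda>D. LBang (trD D)) (mset_set P) \<turnstile>\<^sub>a trG G"
  then have v: "valid (GP P) (trG G)" by (rule ial_valid)
  have "\<forall>B\<in>#GP P. sem P V B" using assms sem_prog by auto
  then have "sem P V (trG G)" using v unfolding valid_def by blast
  then show "ex P G" using sem_iff_ex by blast
qed

end
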